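(* Let $r\ge2$, $k\ge3$ and let $\widehat{F}_k$ be an $r$-coloring of $K_k$. If $G$ is an $(r,\widehat{F}_k)$-extremal graph, $S\subseteq V(G)$ is an independent set and $H=G-S$, then for every $u,v\in S$ we have $\vec{u}_H=\vec{v}_H$.
   Context: An $r$-coloring of a graph assigns colors from $\{1,\dots,r\}$ to edges (not necessarily properly). A copy of $\widehat{F}_k$ in a colored graph is a set of $k$ pairwise adjacent vertices admitting a bijection to $V(K_k)$ under which two edges have equal colors iff their images have equal colors in $\widehat{F}_k$; a coloring is $\widehat{F}_k$-free if it has no copy. $c_{r,\widehat{F}_k}(G)$ is the number of $\widehat{F}_k$-free $r$-colorings of $E(G)$, $c_{r,\widehat{F}_k}(n)$ its maximum over $n$-vertex graphs, and an $n$-vertex graph $G$ is $(r,\widehat{F}_k)$-extremal if $c_{r,\widehat{F}_k}(G)=c_{r,\widehat{F}_k}(n)$. For a subgraph $H$ of $G$, a vertex $v\in V(G)\setminus V(H)$ and an $\widehat{F}_k$-free coloring $\widehat{H}$ of $H$, $c(v,\widehat{H})$ denotes the number of ways to $r$-color the edges of $G$ from $v$ to $V(H)$ so that the resulting coloring of $G[V(H)\cup\{v\}]$ is $\widehat{F}_k$-free. $\vec{v}_H$ is the vector indexed by the $\widehat{F}_k$-free $r$-colorings $\widehat{H}$ of $H$ with $\vec{v}_H(\widehat{H})=c(v,\widehat{H})$. *)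

theory Defs
  imports Main
begin

definition graph :: "'a set \<Rightarrow> 'a set set \<Rightarrow> bool" where
  "graph V E \<longleftrightarrow> finite V \<and> (\<forall>e\<in>E. e \<subseteq> V \<and> card e = 2)"

definition Kedges :: "nat \<Rightarrow> nat set set" where
  "Kedges k = {e. e \<subseteq> {0..<k} \<and> card e = 2}"

definition colorings :: "nat \<Rightarrow> 'a set set \<Rightarrow> ('a set \<Rightarrow> nat) set" where
  "colorings r E = {c. (\<forall>e\<in>E. c e \<in> {1..r}) \<and> (\<forall>e. e \<notin> E \<longrightarrow> c e = 0)}"

definition is_copy :: "nat \<Rightarrow> (nat set \<Rightarrow> nat) \<Rightarrow> 'a set set \<Rightarrow> ('a set \<Rightarrow> nat) \<Rightarrow> 'a set \<Rightarrow> bool" where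
  "is_copy k F E c K \<longleftrightarrow> card K = k \<and> (\<forall>e. e \<subseteq> K \<and> card e = 2 \<longrightarrow> e \<in> E) \<and>
     (\<exists>\<phi>. bij_betw \<phi> K {0..<k} \<and>
        (\<forall>e e'. e \<subseteq> K \<and> card e = 2 \<and> e' \<subseteq> K \<and> card e' = 2 \<longrightarrow>
            (c e = c e' \<longleftrightarrow> F (\<phi> ` e) = F (\<phi> ` e'))))"

definition F_free :: "nat \<Rightarrow> (nat set \<Rightarrow> nat) \<Rightarrow> 'a set \<Rightarrow> 'a set set \<Rightarrow> ('a set \<Rightarrow> nat) \<Rightarrow> bool" where
  "F_free k F V E c \<longleftrightarrow> \<not> (\<exists>K\<subseteq>V. is_copy k F E c K)"

definition free_colorings :: "nat \<Rightarrow> nat \<Rightarrow> (nat set \<Rightarrow> nat) \<Rightarrow> 'a set \<Rightarrow> 'a set set \<Rightarrow> ('a set \<Rightarrow> nat) set" where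
  "free_colorings r k F V E = {c \<in> colorings r E. F_free k F V E c}"

definition count_free :: "nat \<Rightarrow> nat \<Rightarrow> (nat set \<Rightarrow> nat) \<Rightarrow> 'a set \<Rightarrow> 'a set set \<Rightarrow> nat" where
  "count_free r k F V E = card (free_colorings r k F V E)"

definition count_free_n :: "nat \<Rightarrow> nat \<Rightarrow> (nat set \<Rightarrow> nat) \<Rightarrow> nat \<Rightarrow> nat" where
  "count_free_n r k F n = Max {count_free r k F {0..<n} E | E. graph {0..<n} E}"

definition extremal :: "nat \<Rightarrow> nat \<Rightarrow> (nat set \<Rightarrow> nat) \<Rightarrow> 'a set \<Rightarrow> 'a set set \<Rightarrow> bool" where
  "extremal r k F V E \<longleftrightarrow> graph V E \<and> count_free r k F V E = count_free_n r k F (card V)"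

definition star :: "'a set set \<Rightarrow> 'a set \<Rightarrow> 'a \<Rightarrow> 'a set set" where
  "star E VH v = {e \<in> E. \<exists>w\<in>VH. e = {v, w}}"

text \<open>c(v, cH): number of r-colorings of edges from v to V(H) such that the
  combined coloring of G[V(H) \<union> {v}] (H induced, with edges EH) is F-free.\<close>
definition ext_count :: "nat \<Rightarrow> nat \<Rightarrow> (nat set \<Rightarrow> nat) \<Rightarrow> 'a set set \<Rightarrow> 'a set \<Rightarrow> 'a set set \<Rightarrow> 'a \<Rightarrow> ('a set \<Rightarrow> nat) \<Rightarrow> nat" where
  "ext_count r k F E VH EH v cH = card {g \<in> colorings r (star E VH v).
       F_free k F (insert v VH) (EH \<union> star E VH v)
         (\<lambda>e. if e \<in> star E VH v then g e else cH e)}"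

text \<open>The vector v_H, indexed by F-free colorings of H (0 outside the index set).\<close>
definition ext_vec :: "nat \<Rightarrow> nat \<Rightarrow> (nat set \<Rightarrow> nat) \<Rightarrow> 'a set set \<Rightarrow> 'a set \<Rightarrow> 'a set set \<Rightarrow> 'a \<Rightarrow> ('a set \<Rightarrow> nat) \<Rightarrow> nat" where
  "ext_vec r k F E VH EH v = (\<lambda>cH. if cH \<in> free_colorings r k F VH EH then ext_count r k F E VH EH v cH else 0)"

end

theory Submission
  imports Defs "HOL-Analysis.Analysis"
begin
lemma is_copy_local:
  assumes "\<And>e. e \<subseteq> K \<Longrightarrow> card e = 2 \<Longrightarrow> (e \<in> E1 \<longleftrightarrow> e \<in> E2) \<and> c1 e = c2 e"
  shows "is_copy k F E1 c1 K = is_copy k F E2 c2 K"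
proof -
  have a: "(\<forall>e. e \<subseteq> K \<and> card e = 2 \<longrightarrow> e \<in> E1) = (\<forall>e. e \<subseteq> K \<and> card e = 2 \<longrightarrow> e \<in> E2)"
    using assms by blast
  have b: "(\<forall>e e'. e \<subseteq> K \<and> card e = 2 \<and> e' \<subseteq> K \<and> card e' = 2 \<longrightarrow>
            (c1 e = c1 e' \<longleftrightarrow> F (\<phi> ` e) = F (\<phi> ` e'))) =
           (\<forall>e e'. e \<subseteq> K \<and> card e = 2 \<and> e' \<subseteq> K \<and> card e' = 2 \<longrightarrow>
            (c2 e = c2 e' \<longleftrightarrow> F (\<phi> ` e) = F (\<phi> ` e')))" for \<phi>
    using assms by metis
  show ?thesis unfolding is_copy_def using a b by simp
qed

lemma is_copy_transfer:
  assumes inj: "inj_on h V" and KV: "K \<subseteq> V" and EV: "\<forall>e\<in>E. e \<subseteq> V"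
    and cc: "\<And>e. e \<subseteq> V \<Longrightarrow> c' (h ` e) = c e"
    and cp: "is_copy k F ((`) h ` E) c' (h ` K)"
  shows "is_copy k F E c K"
proof -
  have injK: "inj_on h K" using inj KV inj_on_subset by blast
  from cp have cardK: "card (h ` K) = k"
    and ed: "\<And>e. e \<subseteq> h ` K \<Longrightarrow> card e = 2 \<Longrightarrow> e \<in> (`) h ` E"
    and ex: "\<exists>\<phi>. bij_betw \<phi> (h ` K) {0..<k} \<and>
        (\<forall>e e'. e \<subseteq> h ` K \<and> card e = 2 \<and> e' \<subseteq> h ` K \<and> card e' = 2 \<longrightarrow>
            (c' e = c' e' \<longleftrightarrow> F (\<phi> ` e) = F (\<phi> ` e')))"
    unfolding is_copy_def by blast+
  have c1: "card K = k" using cardK card_image[OF injK] by simp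
  have c2: "e \<in> E" if "e \<subseteq> K" "card e = 2" for e
  proof -
    have "card (h ` e) = 2" using that card_image inj_on_subset[OF injK that(1)] by metis
    moreover have "h ` e \<subseteq> h ` K" using that(1) by (rule image_mono)
    ultimately have "h ` e \<in> (`) h ` E" by (rule ed[rotated])
    then obtain e0 where "e0 \<in> E" "h ` e = h ` e0" by blast
    moreover have "e0 \<subseteq> V" using EV \<open>e0 \<in> E\<close> by blast
    moreover have "e \<subseteq> V" using that(1) KV by blast
    ultimately have "e = e0" using inj_on_image_eq_iff[OF inj] by metis
    then show ?thesis using \<open>e0 \<in> E\<close> by simp
  qed
  from ex obtain \<phi> where phi: "bij_betw \<phi> (h ` K) {0..<k}"
     and pat: "\<forall>e e'. e \<subseteq> h ` K \<and> card e = 2 \<and> e' \<subseteq> h ` K \<and> card e' = 2 \<longrightarrow>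
            (c' e = c' e' \<longleftrightarrow> F (\<phi> ` e) = F (\<phi> ` e'))" by blast
  have b: "bij_betw (\<phi> \<circ> h) K {0..<k}"
    using bij_betw_trans[OF inj_on_imp_bij_betw[OF injK] phi] .
  have p: "c e = c e' \<longleftrightarrow> F ((\<phi> \<circ> h) ` e) = F ((\<phi> \<circ> h) ` e')"
    if "e \<subseteq> K" "card e = 2" "e' \<subseteq> K" "card e' = 2" for e e'
  proof -
    have "card (h ` e) = 2" using that card_image inj_on_subset[OF injK that(1)] by metis
    moreover have "card (h ` e') = 2" using that card_image inj_on_subset[OF injK that(3)] by metis
    ultimately have "c' (h ` e) = c' (h ` e') \<longleftrightarrow> F (\<phi> ` h ` e) = F (\<phi> ` h ` e')"
      using pat that by blast
    moreover have "c' (h ` e) = c e" "c' (h ` e') = c e'" using cc that KV by auto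
    ultimately show ?thesis by (simp add: image_comp)
  qed
  show ?thesis unfolding is_copy_def using c1 c2 b p by blast
qed

lemma F_free_transfer:
  assumes inj: "inj_on h V" and EV: "\<forall>e\<in>E. e \<subseteq> V"
    and cc: "\<And>e. e \<subseteq> V \<Longrightarrow> c' (h ` e) = c e"
    and fr: "F_free k F V E c"
  shows "F_free k F (h ` V) ((`) h ` E) c'"
proof -
  { fix K' assume "K' \<subseteq> h ` V" "is_copy k F ((`) h ` E) c' K'"
    then obtain K where "K \<subseteq> V" "K' = h ` K" by (auto simp: subset_image_iff)
    then have "is_copy k F E c K" using is_copy_transfer[of h V K E c' c k F] inj EV cc \<open>is_copy k F ((`) h ` E) c' K'\<close> by blast
    then have False using fr \<open>K \<subseteq> V\<close> unfolding F_free_def by blast }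
  then show ?thesis unfolding F_free_def by blast
qed

lemma finite_colorings:
  assumes "finite E" shows "finite (colorings r E)"
proof -
  have "colorings r E \<subseteq> (\<lambda>f e. if e \<in> E then f e else 0) ` (PiE E (\<lambda>_. {1..r}))"
  proof
    fix c assume c: "c \<in> colorings r E"
    then have "c = (\<lambda>e. if e \<in> E then restrict c E e else 0)"
      unfolding colorings_def by auto
    moreover have "restrict c E \<in> PiE E (\<lambda>_. {1..r})" using c unfolding colorings_def by auto
    ultimately show "c \<in> (\<lambda>f e. if e \<in> E then f e else 0) ` (PiE E (\<lambda>_. {1..r}))" by blast
  qed
  moreover have "finite (PiE E (\<lambda>_. {1..r::nat}))" using assms by (simp add: finite_PiE)
  ultimately show ?thesis using finite_subset by blast
qed

lemma amgm:
  fixes x :: "'a \<Rightarrow> real"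
  assumes "finite S" and x: "\<And>i. i \<in> S \<Longrightarrow> x i \<ge> 0"
  shows "real (card S) * (\<Prod>i\<in>S. x i) \<le> (\<Sum>i\<in>S. x i ^ card S)"
proof (cases "S = {}")
  case True then show ?thesis by simp
next
  case False
  define n where "n = card S"
  have n0: "n > 0" using False assms(1) by (simp add: n_def card_gt_0_iff)
  have "(\<Sum>i\<in>S. x i ^ n / card S) \<ge> (\<Prod>i\<in>S. x i ^ n) powr (1 / card S)"
    by (rule arith_geom_mean) (use assms False x in auto)
  moreover have "(\<Prod>i\<in>S. x i ^ n) = (\<Prod>i\<in>S. x i) ^ n" by (simp add: prod_power_distrib)
  moreover have P0: "(\<Prod>i\<in>S. x i) \<ge> 0" using x by (simp add: prod_nonneg)
  moreover have "((\<Prod>i\<in>S. x i) ^ n) powr (1 / n) = (\<Prod>i\<in>S. x i)"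
  proof (cases "(\<Prod>i\<in>S. x i) = 0")
    case True then show ?thesis using n0 by simp
  next
    case False
    then have p: "(\<Prod>i\<in>S. x i) > 0" using P0 by simp
    have "((\<Prod>i\<in>S. x i) ^ n) powr (1 / n) = ((\<Prod>i\<in>S. x i) powr (real n)) powr (1 / n)"
      using p by (simp add: powr_realpow)
    also have "\<dots> = (\<Prod>i\<in>S. x i)" using n0 p by (simp add: powr_powr)
    finally show ?thesis .
  qed
  ultimately have "(\<Sum>i\<in>S. x i ^ n / n) \<ge> (\<Prod>i\<in>S. x i)" by (simp add: n_def)
  then have "(\<Sum>i\<in>S. x i ^ n) / n \<ge> (\<Prod>i\<in>S. x i)" by (simp add: sum_divide_distrib)
  then show ?thesis using n0 by (simp add: n_def field_simps)
qed

lemma amgm_eq: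
  fixes x :: "'a \<Rightarrow> real"
  assumes fin: "finite S" and x: "\<And>i. i \<in> S \<Longrightarrow> x i \<ge> 0"
    and uv: "u \<in> S" "v \<in> S"
    and eq: "real (card S) * (\<Prod>i\<in>S. x i) = (\<Sum>i\<in>S. x i ^ card S)"
  shows "x u = x v"
proof (rule ccontr)
  assume ne: "x u \<noteq> x v"
  then have uv': "u \<noteq> v" by auto
  define n where "n = card S"
  have n0: "n > 0" using uv fin by (auto simp add: n_def card_gt_0_iff)
  define g where "g = sqrt (x u * x v)"
  define y where "y = x(u := g, v := g)"
  have g0: "g \<ge> 0" using x uv by (simp add: g_def)
  have y0: "\<And>i. i \<in> S \<Longrightarrow> y i \<ge> 0" using x g0 by (simp add: y_def)
  define R where "R = S - {u, v}"
  have SR: "S = insert u (insert v R)" using uv R_def by auto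
  have fR: "finite R" using fin R_def by simp
  have uR: "u \<notin> R" "v \<notin> R" using R_def by auto
  have yR: "\<And>i. i \<in> R \<Longrightarrow> y i = x i" using R_def by (simp add: y_def)
  have "(\<Prod>i\<in>S. y i) = y u * y v * (\<Prod>i\<in>R. y i)" using SR fR uR uv' by (simp add: mult.assoc)
  also have "\<dots> = g * g * (\<Prod>i\<in>R. x i)" using yR uv' by (simp add: y_def)
  also have "g * g = x u * x v" using x uv by (simp add: g_def)
  also have "x u * x v * (\<Prod>i\<in>R. x i) = (\<Prod>i\<in>S. x i)" using SR fR uR uv' by (simp add: mult.assoc)
  finally have Py: "(\<Prod>i\<in>S. y i) = (\<Prod>i\<in>S. x i)" .
  have Sy: "(\<Sum>i\<in>S. y i ^ n) = y u ^ n + y v ^ n + (\<Sum>i\<in>R. y i ^ n)"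
    using SR fR uR uv' by (simp add: add.assoc)
  have Sx: "(\<Sum>i\<in>S. x i ^ n) = x u ^ n + x v ^ n + (\<Sum>i\<in>R. x i ^ n)"
    using SR fR uR uv' by (simp add: add.assoc)
  have sR: "(\<Sum>i\<in>R. y i ^ n) = (\<Sum>i\<in>R. x i ^ n)" using yR by simp
  define a where "a = sqrt (x u ^ n)"
  define b where "b = sqrt (x v ^ n)"
  have a0: "a \<ge> 0" "b \<ge> 0" using x uv by (auto simp: a_def b_def)
  have aa: "a * a = x u ^ n" "b * b = x v ^ n" using x uv by (auto simp: a_def b_def)
  have "a \<noteq> b"
  proof
    assume "a = b"
    then have "x u ^ n = x v ^ n" using aa by simp
    then show False using ne x uv n0 power_eq_imp_eq_base by blast
  qed
  then have "0 < (a - b)^2" by simp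
  then have strict: "2 * (a * b) < x u ^ n + x v ^ n" using aa by (simp add: power2_eq_square algebra_simps)
  have "g ^ n = sqrt ((x u * x v) ^ n)" by (simp add: g_def real_sqrt_power)
  also have "\<dots> = a * b" by (simp add: a_def b_def power_mult_distrib real_sqrt_mult)
  finally have gn: "g ^ n = a * b" .
  have "y u ^ n + y v ^ n = 2 * (a * b)" using uv' gn by (simp add: y_def)
  then have "(\<Sum>i\<in>S. y i ^ n) < (\<Sum>i\<in>S. x i ^ n)" using Sy Sx sR strict by linarith
  moreover have "real n * (\<Prod>i\<in>S. y i) \<le> (\<Sum>i\<in>S. y i ^ n)" using amgm[OF fin y0] n_def by simp
  ultimately show False using eq Py n_def by simp
qed

locale dec =
  fixes V :: "'a set" and S :: "'a set" and E :: "'a set set"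
  assumes finV: "finite V" and SV: "S \<subseteq> V"
    and EV: "\<And>e. e \<in> E \<Longrightarrow> e \<subseteq> V"
    and shape: "\<And>e. e \<in> E \<Longrightarrow> e \<inter> S = {} \<or> (\<exists>s\<in>S. \<exists>x\<in>V - S. e = {s, x})"
begin

abbreviation "VH \<equiv> V - S"
abbreviation "EH \<equiv> {e \<in> E. e \<inter> S = {}}"

lemma finS: "finite S" using finV SV finite_subset by blast
lemma finE: "finite E" using finV EV by (meson Pow_iff finite_Pow_iff finite_subset subsetI)

lemma star_mem: "e \<in> star E VH s \<longleftrightarrow> e \<in> E \<and> (\<exists>w\<in>VH. e = {s, w})"
  unfolding star_def by blast

lemma star_not_EH: "s \<in> S \<Longrightarrow> e \<in> star E VH s \<Longrightarrow> e \<notin> EH"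
  by (auto simp: star_mem)

lemma star_unique: "s \<in> S \<Longrightarrow> t \<in> S \<Longrightarrow> e \<in> star E VH s \<Longrightarrow> e \<in> star E VH t \<Longrightarrow> s = t"
  by (auto simp: star_mem doubleton_eq_iff)

lemma E_cover: "e \<in> E \<Longrightarrow> e \<in> EH \<or> (\<exists>s\<in>S. e \<in> star E VH s)"
  using shape by (auto simp: star_mem)

lemma star_sub: "star E VH s \<subseteq> E" by (auto simp: star_mem)

lemma in_insert_VH:
  assumes "s \<in> S" "e \<subseteq> insert s VH" "e \<in> E"
  shows "e \<in> EH \<or> e \<in> star E VH s"
proof -
  from shape[OF assms(3)] show ?thesis
  proof
    assume "e \<inter> S = {}" then show ?thesis using assms by auto
  next
    assume "\<exists>t\<in>S. \<exists>x\<in>V - S. e = {t, x}"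
    then obtain t x where "t \<in> S" "x \<in> V - S" "e = {t, x}" by blast
    then have "t = s" using assms(2) by auto
    then show ?thesis using \<open>x \<in> V - S\<close> \<open>e = {t, x}\<close> assms(3) by (auto simp: star_mem)
  qed
qed

lemma clique_split:
  assumes "K \<subseteq> V" "\<And>e. e \<subseteq> K \<Longrightarrow> card e = 2 \<Longrightarrow> e \<in> E"
  shows "K \<subseteq> VH \<or> (\<exists>s\<in>S. K \<subseteq> insert s VH)"
proof (cases "K \<inter> S = {}")
  case True then show ?thesis using assms by auto
next
  case False
  then obtain s where s: "s \<in> K" "s \<in> S" by blast
  have "K \<subseteq> insert s VH"
  proof
    fix t assume t: "t \<in> K"
    show "t \<in> insert s VH"
    proof (rule ccontr)
      assume "t \<notin> insert s VH"
      then have "t \<in> S" "t \<noteq> s" using t assms(1) by auto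
      then have "{s, t} \<in> E" using assms(2)[of "{s,t}"] s t by auto
      from shape[OF this] show False using s \<open>t \<in> S\<close> by (auto simp: doubleton_eq_iff)
    qed
  qed
  then show ?thesis using s by blast
qed

definition A :: "nat \<Rightarrow> nat \<Rightarrow> (nat set \<Rightarrow> nat) \<Rightarrow> ('a set \<Rightarrow> nat) set" where
  "A r k F = free_colorings r k F VH EH"

definition G :: "nat \<Rightarrow> nat \<Rightarrow> (nat set \<Rightarrow> nat) \<Rightarrow> ('a set \<Rightarrow> nat) \<Rightarrow> 'a \<Rightarrow> ('a set \<Rightarrow> nat) set" where
  "G r k F cH s = {g \<in> colorings r (star E VH s).
       F_free k F (insert s VH) (EH \<union> star E VH s)
         (\<lambda>e. if e \<in> star E VH s then g e else cH e)}"

lemma ext_count_G: "ext_count r k F E VH EH s cH = card (G r k F cH s)"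
  unfolding ext_count_def G_def ..

definition Phi :: "('a set \<Rightarrow> nat) \<times> ('a \<Rightarrow> 'a set \<Rightarrow> nat) \<Rightarrow> 'a set \<Rightarrow> nat" where
  "Phi p = (\<lambda>e. fst p e + (\<Sum>s\<in>S. snd p s e))"

definition Psi :: "('a set \<Rightarrow> nat) \<Rightarrow> ('a set \<Rightarrow> nat) \<times> ('a \<Rightarrow> 'a set \<Rightarrow> nat)" where
  "Psi c = ((\<lambda>e. if e \<in> EH then c e else 0), (\<lambda>s\<in>S. \<lambda>e. if e \<in> star E VH s then c e else 0))"

lemma sum_single:
  assumes "s0 \<in> S" "\<And>s. s \<in> S \<Longrightarrow> s \<noteq> s0 \<Longrightarrow> f s = (0::nat)"
  shows "(\<Sum>s\<in>S. f s) = f s0"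
proof -
  have "sum f S = f s0 + sum f (S - {s0})" by (rule sum.remove[OF finS assms(1)])
  moreover have "sum f (S - {s0}) = 0" using assms(2) by (intro sum.neutral) auto
  ultimately show ?thesis by simp
qed

lemma Phi_val:
  assumes cH: "cH \<in> colorings r EH" and g: "\<forall>s\<in>S. g s \<in> colorings r (star E VH s)"
  shows "e \<in> EH \<Longrightarrow> Phi (cH, g) e = cH e"
    and "s0 \<in> S \<Longrightarrow> e \<in> star E VH s0 \<Longrightarrow> Phi (cH, g) e = g s0 e"
    and "e \<notin> E \<Longrightarrow> Phi (cH, g) e = 0"
    and "s0 \<in> S \<Longrightarrow> e \<notin> star E VH s0 \<Longrightarrow> e \<subseteq> insert s0 VH \<Longrightarrow> Phi (cH, g) e = cH e"
proof -
  have gz: "g s e = 0" if "s \<in> S" "e \<notin> star E VH s" for s e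
    using g that unfolding colorings_def by blast
  have cz: "cH e = 0" if "e \<notin> EH" for e using cH that unfolding colorings_def by blast
  show "e \<in> EH \<Longrightarrow> Phi (cH, g) e = cH e"
    using gz star_not_EH by (auto simp: Phi_def intro!: sum.neutral)
  show "s0 \<in> S \<Longrightarrow> e \<in> star E VH s0 \<Longrightarrow> Phi (cH, g) e = g s0 e"
  proof -
    assume a: "s0 \<in> S" "e \<in> star E VH s0"
    have "(\<Sum>s\<in>S. g s e) = g s0 e"
      by (rule sum_single[OF a(1)]) (use gz star_unique a in blast)
    then show ?thesis using cz star_not_EH a by (simp add: Phi_def)
  qed
  show "e \<notin> E \<Longrightarrow> Phi (cH, g) e = 0"
  proof -
    assume a: "e \<notin> E"
    have "\<forall>s\<in>S. g s e = 0" using gz star_sub a by blast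
    moreover have "cH e = 0" using cz a by blast
    ultimately show ?thesis by (simp add: Phi_def)
  qed
  show "s0 \<in> S \<Longrightarrow> e \<notin> star E VH s0 \<Longrightarrow> e \<subseteq> insert s0 VH \<Longrightarrow> Phi (cH, g) e = cH e"
  proof -
    assume a: "s0 \<in> S" "e \<notin> star E VH s0" "e \<subseteq> insert s0 VH"
    have "g s e = 0" if "s \<in> S" for s
    proof (cases "s = s0")
      case True then show ?thesis using gz[of s e] a that by simp
    next
      case False
      have "e \<notin> star E VH s" using a False that by (auto simp: star_mem)
      then show ?thesis using gz that by blast
    qed
    then show ?thesis by (simp add: Phi_def)
  qed
qed

end

context dec begin

lemma cz: "cH \<in> colorings r X \<Longrightarrow> e \<notin> X \<Longrightarrow> cH e = 0"
  unfolding colorings_def by blast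

lemma cin: "cH \<in> colorings r X \<Longrightarrow> e \<in> X \<Longrightarrow> cH e \<in> {1..r}"
  unfolding colorings_def by blast

lemma Phi_into:
  assumes cH: "cH \<in> A r k F" and g: "g \<in> PiE S (G r k F cH)"
  shows "Phi (cH, g) \<in> free_colorings r k F V E"
proof -
  have cHc: "cH \<in> colorings r EH" and cHf: "F_free k F VH EH cH"
    using cH unfolding A_def free_colorings_def by auto
  have gc: "\<And>s. s \<in> S \<Longrightarrow> g s \<in> colorings r (star E VH s)"
    and gf: "\<And>s. s \<in> S \<Longrightarrow> F_free k F (insert s VH) (EH \<union> star E VH s)
         (\<lambda>e. if e \<in> star E VH s then g s e else cH e)"
    using g unfolding G_def by (auto simp: PiE_iff)
  have gc': "\<forall>s\<in>S. g s \<in> colorings r (star E VH s)" using gc by blast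
  note PV = Phi_val[OF cHc gc']
  have col: "Phi (cH, g) \<in> colorings r E"
    unfolding colorings_def
  proof (intro CollectI conjI allI ballI impI)
    fix e assume "e \<in> E"
    then have "e \<in> EH \<or> (\<exists>s\<in>S. e \<in> star E VH s)" by (rule E_cover)
    then show "Phi (cH, g) e \<in> {1..r}"
    proof
      assume "e \<in> EH" then show ?thesis using PV(1) cin[OF cHc] by simp
    next
      assume "\<exists>s\<in>S. e \<in> star E VH s"
      then obtain s where "s \<in> S" "e \<in> star E VH s" by blast
      then show ?thesis using PV(2) cin[OF gc] by simp
    qed
  next
    fix e assume "e \<notin> E" then show "Phi (cH, g) e = 0" using PV(3) by simp
  qed
  have fr: "F_free k F V E (Phi (cH, g))"
    unfolding F_free_def
  proof
    assume "\<exists>K\<subseteq>V. is_copy k F E (Phi (cH, g)) K"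
    then obtain K where KV: "K \<subseteq> V" and cp: "is_copy k F E (Phi (cH, g)) K" by blast
    have ed: "\<And>e. e \<subseteq> K \<Longrightarrow> card e = 2 \<Longrightarrow> e \<in> E" using cp unfolding is_copy_def by blast
    from clique_split[OF KV ed] show False
    proof
      assume KH: "K \<subseteq> VH"
      have "is_copy k F EH cH K"
      proof -
        have "is_copy k F E (Phi (cH, g)) K = is_copy k F EH cH K"
        proof (rule is_copy_local)
          fix e assume "e \<subseteq> K" "card e = 2"
          then have eS: "e \<inter> S = {}" using KH by blast
          show "(e \<in> E \<longleftrightarrow> e \<in> EH) \<and> Phi (cH, g) e = cH e"
          proof (cases "e \<in> E")
            case True then show ?thesis using eS PV(1) by auto
          next
            case False then show ?thesis using PV(3) cz[OF cHc] by auto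
          qed
        qed
        then show ?thesis using cp by simp
      qed
      then show False using cHf KH unfolding F_free_def by blast
    next
      assume "\<exists>s\<in>S. K \<subseteq> insert s VH"
      then obtain s where s: "s \<in> S" and Ks: "K \<subseteq> insert s VH" by blast
      have "is_copy k F E (Phi (cH, g)) K = is_copy k F (EH \<union> star E VH s)
               (\<lambda>e. if e \<in> star E VH s then g s e else cH e) K"
      proof (rule is_copy_local)
        fix e assume eK: "e \<subseteq> K" "card e = 2"
        then have es: "e \<subseteq> insert s VH" using Ks by blast
        have m: "e \<in> E \<longleftrightarrow> e \<in> EH \<union> star E VH s"
          using in_insert_VH[OF s es] star_sub by blast
        have v: "Phi (cH, g) e = (if e \<in> star E VH s then g s e else cH e)"
          using PV(2)[OF s] PV(4)[OF s _ es] by simp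
        show "(e \<in> E \<longleftrightarrow> e \<in> EH \<union> star E VH s) \<and>
           Phi (cH, g) e = (if e \<in> star E VH s then g s e else cH e)" using m v by blast
      qed
      then show False using gf[OF s] Ks cp unfolding F_free_def by blast
    qed
  qed
  show ?thesis using col fr unfolding free_colorings_def by blast
qed

lemma Psi_into:
  assumes c: "c \<in> free_colorings r k F V E"
  shows "Psi c \<in> Sigma (A r k F) (\<lambda>cH. PiE S (G r k F cH))"
proof -
  have cc: "c \<in> colorings r E" and cf: "F_free k F V E c"
    using c unfolding free_colorings_def by auto
  define cH where "cH = (\<lambda>e. if e \<in> EH then c e else 0)"
  define g where "g = (\<lambda>s\<in>S. \<lambda>e. if e \<in> star E VH s then c e else 0)"
  have P: "Psi c = (cH, g)" unfolding Psi_def cH_def g_def by simp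
  have cHc: "cH \<in> colorings r EH" using cc unfolding colorings_def cH_def by auto
  have cHf: "F_free k F VH EH cH"
    unfolding F_free_def
  proof
    assume "\<exists>K\<subseteq>VH. is_copy k F EH cH K"
    then obtain K where KH: "K \<subseteq> VH" and cp: "is_copy k F EH cH K" by blast
    have "is_copy k F EH cH K = is_copy k F E c K"
    proof (rule is_copy_local)
      fix e assume "e \<subseteq> K" "card e = 2"
      then have eS: "e \<inter> S = {}" using KH by blast
      show "(e \<in> EH \<longleftrightarrow> e \<in> E) \<and> cH e = c e"
        using eS cz[OF cc] by (auto simp: cH_def)
    qed
    then show False using cf cp KH unfolding F_free_def by blast
  qed
  have gG: "g s \<in> G r k F cH s" if s: "s \<in> S" for s
  proof -
    have gs: "g s = (\<lambda>e. if e \<in> star E VH s then c e else 0)" using s by (simp add: g_def)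
    have col: "g s \<in> colorings r (star E VH s)"
      using cc star_sub unfolding gs colorings_def by auto
    have fr: "F_free k F (insert s VH) (EH \<union> star E VH s)
         (\<lambda>e. if e \<in> star E VH s then g s e else cH e)"
      unfolding F_free_def
    proof
      assume "\<exists>K\<subseteq>insert s VH. is_copy k F (EH \<union> star E VH s)
         (\<lambda>e. if e \<in> star E VH s then g s e else cH e) K"
      then obtain K where Ks: "K \<subseteq> insert s VH" and cp: "is_copy k F (EH \<union> star E VH s)
         (\<lambda>e. if e \<in> star E VH s then g s e else cH e) K" by blast
      have "is_copy k F (EH \<union> star E VH s)
         (\<lambda>e. if e \<in> star E VH s then g s e else cH e) K = is_copy k F E c K"
      proof (rule is_copy_local)
        fix e assume eK: "e \<subseteq> K" "card e = 2"
        then have es: "e \<subseteq> insert s VH" using Ks by blast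
        have m: "e \<in> E \<longleftrightarrow> e \<in> EH \<union> star E VH s"
          using in_insert_VH[OF s es] star_sub by blast
        have v: "(if e \<in> star E VH s then g s e else cH e) = c e"
          using m cz[OF cc] by (auto simp: gs cH_def)
        show "(e \<in> EH \<union> star E VH s \<longleftrightarrow> e \<in> E) \<and>
           (if e \<in> star E VH s then g s e else cH e) = c e" using m v by blast
      qed
      moreover have "K \<subseteq> V" using Ks s SV by blast
      ultimately show False using cf cp unfolding F_free_def by blast
    qed
    show ?thesis using col fr unfolding G_def by blast
  qed
  have "g \<in> PiE S (G r k F cH)" using gG by (auto simp: g_def PiE_iff)
  moreover have "cH \<in> A r k F" using cHc cHf unfolding A_def free_colorings_def by blast
  ultimately show ?thesis using P by simp
qed

lemma Psi_Phi:
  assumes cH: "cH \<in> A r k F" and g: "g \<in> PiE S (G r k F cH)"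
  shows "Psi (Phi (cH, g)) = (cH, g)"
proof -
  have cHc: "cH \<in> colorings r EH"
    using cH unfolding A_def free_colorings_def by auto
  have gc: "\<And>s. s \<in> S \<Longrightarrow> g s \<in> colorings r (star E VH s)"
    using g unfolding G_def by (auto simp: PiE_iff)
  have gc': "\<forall>s\<in>S. g s \<in> colorings r (star E VH s)" using gc by blast
  note PV = Phi_val[OF cHc gc']
  have 1: "(\<lambda>e. if e \<in> EH then Phi (cH, g) e else 0) = cH"
  proof
    fix e show "(if e \<in> EH then Phi (cH, g) e else 0) = cH e"
      using PV(1) cz[OF cHc] by auto
  qed
  have 2: "(\<lambda>s\<in>S. \<lambda>e. if e \<in> star E VH s then Phi (cH, g) e else 0) = g"
  proof
    fix s show "(\<lambda>s\<in>S. \<lambda>e. if e \<in> star E VH s then Phi (cH, g) e else 0) s = g s"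
    proof (cases "s \<in> S")
      case True
      show ?thesis
      proof
        fix e show "(\<lambda>s\<in>S. \<lambda>e. if e \<in> star E VH s then Phi (cH, g) e else 0) s e = g s e"
          using True PV(2)[OF True] cz[OF gc[OF True]] by auto
      qed
    next
      case False then show ?thesis using PiE_arb[OF g False] by simp
    qed
  qed
  show ?thesis unfolding Psi_def using 1 2 by simp
qed

lemma Phi_Psi:
  assumes c: "c \<in> free_colorings r k F V E"
  shows "Phi (Psi c) = c"
proof
  fix e
  have cc: "c \<in> colorings r E" using c unfolding free_colorings_def by auto
  have "e \<in> EH \<or> (\<exists>s\<in>S. e \<in> star E VH s) \<or> e \<notin> E" using E_cover by blast
  then show "Phi (Psi c) e = c e"
  proof (elim disjE)
    assume a: "e \<in> EH"
    then have "\<forall>s\<in>S. e \<notin> star E VH s" using star_not_EH by blast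
    then show ?thesis using a by (simp add: Phi_def Psi_def)
  next
    assume "\<exists>s\<in>S. e \<in> star E VH s"
    then obtain s0 where s0: "s0 \<in> S" "e \<in> star E VH s0" by blast
    have "(\<Sum>s\<in>S. (if e \<in> star E VH s then c e else 0)) = (if e \<in> star E VH s0 then c e else 0)"
      by (rule sum_single[OF s0(1)]) (use star_unique s0 in auto)
    then have "(\<Sum>s\<in>S. (if e \<in> star E VH s then c e else 0)) = c e" using s0 by simp
    moreover have "e \<notin> EH" using star_not_EH s0 by blast
    ultimately show ?thesis by (auto simp add: Phi_def Psi_def)
  next
    assume a: "e \<notin> E"
    then have "\<forall>s\<in>S. e \<notin> star E VH s" using star_sub by blast
    then show ?thesis using a cz[OF cc a] by (simp add: Phi_def Psi_def)
  qed
qed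

lemma decomp:
  "count_free r k F V E = (\<Sum>cH\<in>A r k F. \<Prod>s\<in>S. ext_count r k F E VH EH s cH)"
proof -
  have b: "bij_betw Phi (Sigma (A r k F) (\<lambda>cH. PiE S (G r k F cH))) (free_colorings r k F V E)"
  proof (rule bij_betw_byWitness[where f'=Psi])
    show "\<forall>a\<in>Sigma (A r k F) (\<lambda>cH. PiE S (G r k F cH)). Psi (Phi a) = a"
      using Psi_Phi by auto
    show "\<forall>a'\<in>free_colorings r k F V E. Phi (Psi a') = a'" using Phi_Psi by auto
    show "Phi ` Sigma (A r k F) (\<lambda>cH. PiE S (G r k F cH)) \<subseteq> free_colorings r k F V E"
      using Phi_into by fast
    show "Psi ` free_colorings r k F V E \<subseteq> Sigma (A r k F) (\<lambda>cH. PiE S (G r k F cH))"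
      by (intro image_subsetI Psi_into)
  qed
  have finEH: "finite EH" using finE by simp
  have fA: "finite (A r k F)"
    using finite_colorings[OF finEH] unfolding A_def free_colorings_def by (rule finite_subset[rotated]) auto
  have fG: "finite (G r k F cH s)" for cH s
  proof -
    have "finite (colorings r (star E VH s))"
      using finite_colorings finite_subset[OF star_sub finE] by blast
    then show ?thesis unfolding G_def by (rule finite_subset[rotated]) auto
  qed
  have "count_free r k F V E = card (Sigma (A r k F) (\<lambda>cH. PiE S (G r k F cH)))"
    unfolding count_free_def using bij_betw_same_card[OF b] by simp
  also have "\<dots> = (\<Sum>cH\<in>A r k F. card (PiE S (G r k F cH)))"
    using fA fG finS by (simp add: finite_PiE)
  also have "\<dots> = (\<Sum>cH\<in>A r k F. \<Prod>s\<in>S. ext_count r k F E VH EH s cH)"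
    using finS by (simp add: card_PiE ext_count_G)
  finally show ?thesis .
qed

end

lemma count_le_n:
  assumes gr: "graph V E'"
  shows "count_free r k F V E' \<le> count_free_n r k F (card V)"
proof -
  define n where "n = card V"
  have finV: "finite V" and EV: "\<And>e. e \<in> E' \<Longrightarrow> e \<subseteq> V" and E2c: "\<And>e. e \<in> E' \<Longrightarrow> card e = 2"
    using gr unfolding graph_def by auto
  have "\<exists>h. bij_betw h V {0..<n}" by (rule finite_same_card_bij) (simp_all add: finV n_def)
  then obtain h where h: "bij_betw h V {0..<n}" by blast
  have inj: "inj_on h V" and hV: "h ` V = {0..<n}" using h unfolding bij_betw_def by blast+
  define E2 where "E2 = (`) h ` E'"
  have finE': "finite E'" using finV EV by (meson Pow_iff finite_Pow_iff finite_subset subsetI)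
  have gr2: "graph {0..<n} E2"
    unfolding graph_def
  proof (intro conjI ballI)
    show "finite {0..<n}" by simp
    fix e2 assume "e2 \<in> E2"
    then obtain e where e: "e \<in> E'" "e2 = h ` e" unfolding E2_def by blast
    show "e2 \<subseteq> {0..<n}" using e EV hV by blast
    have "inj_on h e" using inj_on_subset[OF inj EV[OF e(1)]] .
    then have "card (h ` e) = card e" by (rule card_image)
    then show "card e2 = 2" using e E2c by simp
  qed
  define M where "M c = (\<lambda>e'. if e' \<in> E2 then c (inv_into V h ` e') else 0)" for c :: "'a set \<Rightarrow> nat"
  have Mh: "M c (h ` e) = c e" if c: "c \<in> colorings r E'" and eV: "e \<subseteq> V" for c e
  proof (cases "h ` e \<in> E2")
    case True
    then obtain e0 where e0: "e0 \<in> E'" "h ` e = h ` e0" unfolding E2_def by blast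
    then have "e = e0" using inj_on_image_eq_iff[OF inj eV EV[OF e0(1)]] by simp
    moreover have "inv_into V h ` h ` e = e" using inj eV by simp
    ultimately show ?thesis using True by (simp add: M_def)
  next
    case False
    then have "e \<notin> E'" unfolding E2_def by blast
    then show ?thesis using False c unfolding M_def colorings_def by auto
  qed
  have Min: "M c \<in> free_colorings r k F {0..<n} E2" if c: "c \<in> free_colorings r k F V E'" for c
  proof -
    have cc: "c \<in> colorings r E'" and cf: "F_free k F V E' c" using c unfolding free_colorings_def by auto
    have "M c \<in> colorings r E2"
      unfolding colorings_def
    proof (intro CollectI conjI ballI allI impI)
      fix e2 assume "e2 \<in> E2"
      then obtain e where e: "e \<in> E'" "e2 = h ` e" unfolding E2_def by blast
      then show "M c e2 \<in> {1..r}" using Mh[OF cc EV[OF e(1)]] cc unfolding colorings_def by auto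
    next
      fix e2 assume "e2 \<notin> E2" then show "M c e2 = 0" by (simp add: M_def)
    qed
    moreover have "F_free k F (h ` V) ((`) h ` E') (M c)"
      by (rule F_free_transfer[of h V E' "M c" c k F]) (use inj EV Mh[OF cc] cf in auto)
    ultimately show ?thesis unfolding free_colorings_def E2_def hV by blast
  qed
  have Minj: "inj_on M (free_colorings r k F V E')"
  proof (rule inj_onI)
    fix c1 c2 assume c1: "c1 \<in> free_colorings r k F V E'" and c2: "c2 \<in> free_colorings r k F V E'"
      and eq: "M c1 = M c2"
    have cc1: "c1 \<in> colorings r E'" and cc2: "c2 \<in> colorings r E'"
      using c1 c2 unfolding free_colorings_def by auto
    show "c1 = c2"
    proof
      fix e show "c1 e = c2 e"
      proof (cases "e \<in> E'")
        case True
        then show ?thesis using Mh[OF cc1 EV[OF True]] Mh[OF cc2 EV[OF True]] eq by metis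
      next
        case False then show ?thesis using cc1 cc2 unfolding colorings_def by auto
      qed
    qed
  qed
  have finE2: "finite E2" using finE' unfolding E2_def by simp
  have fin2: "finite (free_colorings r k F {0..<n} E2)"
    using finite_colorings[OF finE2] unfolding free_colorings_def by (rule finite_subset[rotated]) auto
  have "count_free r k F V E' \<le> count_free r k F {0..<n} E2"
    unfolding count_free_def by (rule card_inj_on_le[OF Minj _ fin2]) (use Min in blast)
  also have "\<dots> \<le> count_free_n r k F n"
    unfolding count_free_n_def
  proof (rule Max_ge)
    have "{count_free r k F {0..<n} E |E. graph {0..<n} E} = (\<lambda>E. count_free r k F {0..<n} E) ` {E. graph {0..<n} E}"
      by blast
    moreover have "finite {E. graph {0..<n} E}"
      by (rule finite_subset[of _ "Pow (Pow {0..<n})"]) (auto simp: graph_def)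
    ultimately show "finite {count_free r k F {0..<n} E |E. graph {0..<n} E}" by simp
    show "count_free r k F {0..<n} E2 \<in> {count_free r k F {0..<n} E |E. graph {0..<n} E}"
      using gr2 by blast
  qed
  finally show ?thesis using n_def by simp
qed

lemma G_transfer:
  assumes inv: "\<forall>x. h (h x) = x"
    and V2: "V2 = h ` V1" and st2: "st2 = (`) h ` st1"
    and EHfix: "\<forall>e\<in>EH. h ` e = e"
    and EV: "\<forall>e\<in>EH \<union> st1. e \<subseteq> V1"
    and cH: "cH \<in> colorings r EH"
    and g: "g \<in> colorings r st1"
    and fr: "F_free k F V1 (EH \<union> st1) (\<lambda>e. if e \<in> st1 then g e else cH e)"
  shows "(\<lambda>e. g (h ` e)) \<in> colorings r st2 \<and>
         F_free k F V2 (EH \<union> st2) (\<lambda>e. if e \<in> st2 then g (h ` e) else cH e)"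
proof -
  have hh: "h ` h ` e = e" for e using inv by (simp add: image_image)
  have inj: "inj h" using inv by (metis injI)
  have mem1: "h ` e \<in> st2 \<longleftrightarrow> e \<in> st1" for e
  proof
    assume "h ` e \<in> st2"
    then obtain e1 where "e1 \<in> st1" "h ` e = h ` e1" using st2 by blast
    then have "h ` h ` e = h ` h ` e1" by simp
    then have "e = e1" using hh by simp
    then show "e \<in> st1" using \<open>e1 \<in> st1\<close> by simp
  qed (use st2 in blast)
  have mem2: "e \<in> st2 \<longleftrightarrow> h ` e \<in> st1" for e using mem1[of "h ` e"] hh by simp
  have cHi: "cH (h ` e) = cH e" for e
  proof (cases "e \<in> EH")
    case True then show ?thesis using EHfix by simp
  next
    case False
    have "h ` e \<notin> EH"
    proof
      assume "h ` e \<in> EH"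
      then have "h ` h ` e = h ` e" using EHfix by blast
      then have "e = h ` e" using hh by simp
      then show False using False \<open>h ` e \<in> EH\<close> by simp
    qed
    then show ?thesis using False cH unfolding colorings_def by auto
  qed
  have col: "(\<lambda>e. g (h ` e)) \<in> colorings r st2"
    using g mem2 unfolding colorings_def by auto
  have EHi: "(`) h ` EH = EH"
  proof -
    have "(`) h ` EH = (\<lambda>e. e) ` EH" by (rule image_cong) (use EHfix in auto)
    then show ?thesis by simp
  qed
  have "F_free k F (h ` V1) ((`) h ` (EH \<union> st1)) (\<lambda>e. if e \<in> st2 then g (h ` e) else cH e)"
  proof (rule F_free_transfer[of h V1 "EH \<union> st1" "\<lambda>e. if e \<in> st2 then g (h ` e) else cH e" "\<lambda>e. if e \<in> st1 then g e else cH e" k F])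
    show "inj_on h V1" using inj inj_on_subset by blast
    show "F_free k F V1 (EH \<union> st1) (\<lambda>e. if e \<in> st1 then g e else cH e)" using fr .
    show "\<forall>e\<in>EH \<union> st1. e \<subseteq> V1" using EV .
    fix e assume "e \<subseteq> V1"
    show "(if h ` e \<in> st2 then g (h ` h ` e) else cH (h ` e)) = (if e \<in> st1 then g e else cH e)"
      using mem1 hh cHi by simp
  qed
  moreover have "(`) h ` (EH \<union> st1) = EH \<union> st2" using EHi st2 by (simp add: image_Un)
  ultimately show ?thesis using col V2 by simp
qed

lemma ext_count_transfer:
  assumes inv: "\<forall>x. h (h x) = x"
    and V2: "V2 = h ` V1" and st2: "st2 = (`) h ` st1"
    and EHfix: "\<forall>e\<in>EH. h ` e = e"
    and EV1: "\<forall>e\<in>EH \<union> st1. e \<subseteq> V1"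
    and EV2: "\<forall>e\<in>EH \<union> st2. e \<subseteq> V2"
    and cH: "cH \<in> colorings r EH"
  shows "card {g \<in> colorings r st1. F_free k F V1 (EH \<union> st1) (\<lambda>e. if e \<in> st1 then g e else cH e)}
       = card {g \<in> colorings r st2. F_free k F V2 (EH \<union> st2) (\<lambda>e. if e \<in> st2 then g e else cH e)}"
proof -
  have hh: "h ` h ` e = e" for e using inv by (simp add: image_image)
  have V1: "V1 = h ` V2" using V2 hh by simp
  have st1: "st1 = (`) h ` st2" using st2 hh by (simp add: image_image)
  show ?thesis
  proof (rule bij_betw_same_card[of "\<lambda>g e. g (h ` e)"], rule bij_betw_byWitness[where f'="\<lambda>g e. g (h ` e)"])
    show "\<forall>a\<in>{g \<in> colorings r st1. F_free k F V1 (EH \<union> st1) (\<lambda>e. if e \<in> st1 then g e else cH e)}.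
        (\<lambda>e. (\<lambda>e. a (h ` e)) (h ` e)) = a" using hh by simp
    show "\<forall>a\<in>{g \<in> colorings r st2. F_free k F V2 (EH \<union> st2) (\<lambda>e. if e \<in> st2 then g e else cH e)}.
        (\<lambda>e. (\<lambda>e. a (h ` e)) (h ` e)) = a" using hh by simp
    show "(\<lambda>g e. g (h ` e)) ` {g \<in> colorings r st1. F_free k F V1 (EH \<union> st1) (\<lambda>e. if e \<in> st1 then g e else cH e)}
        \<subseteq> {g \<in> colorings r st2. F_free k F V2 (EH \<union> st2) (\<lambda>e. if e \<in> st2 then g e else cH e)}"
      using G_transfer[OF inv V2 st2 EHfix EV1 cH] by auto
    show "(\<lambda>g e. g (h ` e)) ` {g \<in> colorings r st2. F_free k F V2 (EH \<union> st2) (\<lambda>e. if e \<in> st2 then g e else cH e)}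
        \<subseteq> {g \<in> colorings r st1. F_free k F V1 (EH \<union> st1) (\<lambda>e. if e \<in> st1 then g e else cH e)}"
      using G_transfer[OF inv V1 st1 EHfix EV2 cH] by auto
  qed
qed

definition clone :: "'a set set \<Rightarrow> 'a set \<Rightarrow> 'a set \<Rightarrow> 'a \<Rightarrow> 'a set set" where
  "clone E V S w = {e \<in> E. e \<inter> S = {}} \<union> {{s, x} | s x. s \<in> S \<and> x \<in> V - S \<and> {w, x} \<in> E}"

definition tau :: "'a \<Rightarrow> 'a \<Rightarrow> 'a \<Rightarrow> 'a" where
  "tau t w x = (if x = t then w else if x = w then t else x)"

lemma tau_inv: "tau t w (tau t w x) = x" by (simp add: tau_def)

lemma tau_fix: "x \<noteq> t \<Longrightarrow> x \<noteq> w \<Longrightarrow> tau t w x = x" by (simp add: tau_def)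

lemma star_eq: "star E VH w = {{w, x} | x. x \<in> VH \<and> {w, x} \<in> E}"
  unfolding star_def by blast

lemma clone_facts:
  assumes d: "dec V S E" and w: "w \<in> S" and c2: "\<And>e. e \<in> E \<Longrightarrow> card e = 2"
  shows "dec V S (clone E V S w)"
    and "graph V (clone E V S w)"
    and "{e \<in> clone E V S w. e \<inter> S = {}} = {e \<in> E. e \<inter> S = {}}"
    and "t \<in> S \<Longrightarrow> star (clone E V S w) (V - S) t = {{t, x} | x. x \<in> V - S \<and> {w, x} \<in> E}"
proof -
  interpret dec V S E by (rule d)
  show "dec V S (clone E V S w)"
  proof
    show "finite V" by (rule finV)
    show "S \<subseteq> V" by (rule SV)
    fix e assume "e \<in> clone E V S w"
    then have "(e \<in> E \<and> e \<inter> S = {}) \<or> (\<exists>s x. e = {s, x} \<and> s \<in> S \<and> x \<in> V - S)"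
      unfolding clone_def by blast
    then show "e \<subseteq> V" "e \<inter> S = {} \<or> (\<exists>s\<in>S. \<exists>x\<in>V - S. e = {s, x})"
      using EV SV by blast+
  qed
  show "graph V (clone E V S w)"
    unfolding graph_def
  proof (intro conjI ballI)
    show "finite V" by (rule finV)
    fix e assume "e \<in> clone E V S w"
    then have "(e \<in> E \<and> e \<inter> S = {}) \<or> (\<exists>s x. e = {s, x} \<and> s \<in> S \<and> x \<in> V - S)"
      unfolding clone_def by blast
    then show "e \<subseteq> V" "card e = 2"
    proof -
      show "e \<subseteq> V" using \<open>(e \<in> E \<and> e \<inter> S = {}) \<or> _\<close> EV SV by blast
    next
      show "card e = 2"
        using \<open>(e \<in> E \<and> e \<inter> S = {}) \<or> _\<close>
      proof
        assume "e \<in> E \<and> e \<inter> S = {}"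
        then show ?thesis using c2 by blast
      next
        assume "\<exists>s x. e = {s, x} \<and> s \<in> S \<and> x \<in> V - S"
        then obtain s x where "e = {s, x}" "s \<in> S" "x \<in> V - S" by blast
        then show ?thesis by (auto simp: card_2_iff)
      qed
    qed
  qed
  show "{e \<in> clone E V S w. e \<inter> S = {}} = {e \<in> E. e \<inter> S = {}}"
    unfolding clone_def by blast
  assume t: "t \<in> S"
  show "star (clone E V S w) (V - S) t = {{t, x} | x. x \<in> V - S \<and> {w, x} \<in> E}"
  proof (rule set_eqI)
    fix e
    show "e \<in> star (clone E V S w) (V - S) t \<longleftrightarrow> e \<in> {{t, x} | x. x \<in> V - S \<and> {w, x} \<in> E}"
    proof
      assume "e \<in> star (clone E V S w) (V - S) t"
      then obtain y where y: "y \<in> V - S" "e = {t, y}" "e \<in> clone E V S w" unfolding star_def by blast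
      then have "e \<notin> {e \<in> E. e \<inter> S = {}}" using t by blast
      then obtain s x where sx: "e = {s, x}" "s \<in> S" "x \<in> V - S" "{w, x} \<in> E"
        using y(3) unfolding clone_def by blast
      then have "x = y" using y t by (auto simp: doubleton_eq_iff)
      then show "e \<in> {{t, x} | x. x \<in> V - S \<and> {w, x} \<in> E}" using sx y by blast
    next
      assume "e \<in> {{t, x} | x. x \<in> V - S \<and> {w, x} \<in> E}"
      then obtain x where "e = {t, x}" "x \<in> V - S" "{w, x} \<in> E" by blast
      then show "e \<in> star (clone E V S w) (V - S) t" unfolding star_def clone_def using t by blast
    qed
  qed
qed

lemma ext_clone:
  assumes d: "dec V S E" and w: "w \<in> S" and c2: "\<And>e. e \<in> E \<Longrightarrow> card e = 2"
    and t: "t \<in> S" and cH: "cH \<in> colorings r {e \<in> E. e \<inter> S = {}}"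
  shows "ext_count r k F (clone E V S w) (V - S) {e \<in> E. e \<inter> S = {}} t cH
       = ext_count r k F E (V - S) {e \<in> E. e \<inter> S = {}} w cH"
proof -
  interpret dec V S E by (rule d)
  have st1: "star (clone E V S w) (V - S) t = {{t, x} | x. x \<in> V - S \<and> {w, x} \<in> E}"
    by (rule clone_facts(4)[OF d w]) (use c2 t in auto)
  have st2: "star E (V - S) w = {{w, x} | x. x \<in> V - S \<and> {w, x} \<in> E}" by (rule star_eq)
  let ?h = "tau t w"
  have img: "?h ` {t, x} = {w, x}" if "x \<in> V - S" for x
    using that t w by (auto simp: tau_def)
  have fixe: "?h ` e = e" if "e \<inter> S = {}" for e
  proof -
    have "\<forall>x\<in>e. ?h x = x" using that t w by (auto simp: tau_def)
    then show ?thesis by (simp add: image_cong[of e e ?h id])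
  qed
  show ?thesis unfolding ext_count_def
  proof (rule ext_count_transfer)
    show "\<forall>x. ?h (?h x) = x" by (simp add: tau_inv)
    show "insert w (V - S) = ?h ` insert t (V - S)"
      using t w by (auto simp: tau_def)
    show "star E (V - S) w = (`) ?h ` star (clone E V S w) (V - S) t"
      unfolding st1 st2
    proof (rule set_eqI, rule iffI)
      fix e assume "e \<in> {{w, x} | x. x \<in> V - S \<and> {w, x} \<in> E}"
      then obtain x where x: "e = {w, x}" "x \<in> V - S" "{w, x} \<in> E" by blast
      then have "e = ?h ` {t, x}" using img by simp
      moreover have "{t, x} \<in> {{t, x} | x. x \<in> V - S \<and> {w, x} \<in> E}" using x by blast
      ultimately show "e \<in> (`) ?h ` {{t, x} | x. x \<in> V - S \<and> {w, x} \<in> E}" by blast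
    next
      fix e assume "e \<in> (`) ?h ` {{t, x} | x. x \<in> V - S \<and> {w, x} \<in> E}"
      then obtain x where x: "e = ?h ` {t, x}" "x \<in> V - S" "{w, x} \<in> E" by blast
      then have "e = {w, x}" using img by simp
      then show "e \<in> {{w, x} | x. x \<in> V - S \<and> {w, x} \<in> E}" using x by blast
    qed
    show "\<forall>e\<in>{e \<in> E. e \<inter> S = {}}. ?h ` e = e" using fixe by blast
    show "\<forall>e\<in>{e \<in> E. e \<inter> S = {}} \<union> star (clone E V S w) (V - S) t. e \<subseteq> insert t (V - S)"
      unfolding st1 using EV by blast
    show "\<forall>e\<in>{e \<in> E. e \<inter> S = {}} \<union> star E (V - S) w. e \<subseteq> insert w (V - S)"
      unfolding st2 using EV by blast
    show "cH \<in> colorings r {e \<in> E. e \<inter> S = {}}" by (rule cH)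
  qed
qed

theorem corollary2p8:
  fixes V :: "'a set" and E :: "'a set set" and S :: "'a set"
    and F :: "nat set \<Rightarrow> nat" and r k :: nat and u v :: 'a
  assumes "r \<ge> 2" and "k \<ge> 3"
    and "F \<in> colorings r (Kedges k)"
    and "extremal r k F V E"
    and "S \<subseteq> V" and "\<forall>e\<in>E. \<not> e \<subseteq> S"
    and "u \<in> S" and "v \<in> S"
  shows "ext_vec r k F E (V - S) {e \<in> E. e \<inter> S = {}} u
       = ext_vec r k F E (V - S) {e \<in> E. e \<inter> S = {}} v"
proof -
  have gr: "graph V E" and cE: "count_free r k F V E = count_free_n r k F (card V)"
    using assms(4) unfolding extremal_def by auto
  have finV: "finite V" and EV: "\<And>e. e \<in> E \<Longrightarrow> e \<subseteq> V" and c2: "\<And>e. e \<in> E \<Longrightarrow> card e = 2"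
    using gr unfolding graph_def by auto
  have d: "dec V S E"
  proof
    show "finite V" by (rule finV)
    show "S \<subseteq> V" by (rule assms(5))
    fix e assume e: "e \<in> E"
    show "e \<subseteq> V" using EV[OF e] .
    obtain a b where ab: "e = {a, b}" "a \<noteq> b" using c2[OF e] by (auto simp: card_2_iff)
    have nS: "\<not> e \<subseteq> S" using assms(6) e by blast
    show "e \<inter> S = {} \<or> (\<exists>s\<in>S. \<exists>x\<in>V - S. e = {s, x})"
    proof (cases "a \<in> S")
      case True
      then have "b \<notin> S" using nS ab by auto
      then show ?thesis using True ab EV[OF e] by blast
    next
      case False
      show ?thesis
      proof (cases "b \<in> S")
        case True
        then show ?thesis using False ab EV[OF e] by (metis Diff_iff insert_commute insert_subset)
      next
        case False2: False
        then show ?thesis using False ab by auto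
      qed
    qed
  qed
  interpret dec V S E by (rule d)
  define A0 where "A0 = free_colorings r k F (V - S) {e \<in> E. e \<inter> S = {}}"
  define X where "X s cH = ext_count r k F E (V - S) {e \<in> E. e \<inter> S = {}} s cH" for s cH
  define n where "n = card S"
  have finA0: "finite A0"
    using finite_colorings[of "{e \<in> E. e \<inter> S = {}}" r] finE unfolding A0_def free_colorings_def
    by (auto intro: finite_subset)
  have cnt: "count_free r k F V E = (\<Sum>cH\<in>A0. \<Prod>s\<in>S. X s cH)"
    using decomp unfolding A_def A0_def X_def by simp
  have cntw: "count_free r k F V (clone E V S w) = (\<Sum>cH\<in>A0. X w cH ^ n)" if w: "w \<in> S" for w
  proof -
    have dw: "dec V S (clone E V S w)" by (rule clone_facts(1)[OF d w]) (use c2 in auto)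
    have EHw: "{e \<in> clone E V S w. e \<inter> S = {}} = {e \<in> E. e \<inter> S = {}}"
      by (rule clone_facts(3)[OF d w]) (use c2 in auto)
    have "count_free r k F V (clone E V S w) =
        (\<Sum>cH\<in>dec.A V S (clone E V S w) r k F. \<Prod>t\<in>S. ext_count r k F (clone E V S w) (V - S) {e \<in> clone E V S w. e \<inter> S = {}} t cH)"
      by (rule dec.decomp[OF dw])
    also have "\<dots> = (\<Sum>cH\<in>A0. \<Prod>t\<in>S. ext_count r k F (clone E V S w) (V - S) {e \<in> E. e \<inter> S = {}} t cH)"
      using dec.A_def[OF dw] EHw by (simp add: A0_def)
    also have "\<dots> = (\<Sum>cH\<in>A0. \<Prod>t\<in>S. X w cH)"
    proof (rule sum.cong[OF refl], rule prod.cong[OF refl])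
      fix cH t assume cH: "cH \<in> A0" and t: "t \<in> S"
      have cHc: "cH \<in> colorings r {e \<in> E. e \<inter> S = {}}" using cH unfolding A0_def free_colorings_def by blast
      show "ext_count r k F (clone E V S w) (V - S) {e \<in> E. e \<inter> S = {}} t cH = X w cH"
        unfolding X_def by (rule ext_clone[OF d w]) (use c2 t cHc in auto)
    qed
    also have "\<dots> = (\<Sum>cH\<in>A0. X w cH ^ n)" by (simp add: n_def)
    finally show ?thesis .
  qed
  have lew: "count_free r k F V (clone E V S w) \<le> count_free r k F V E" if w: "w \<in> S" for w
  proof -
    have "graph V (clone E V S w)" by (rule clone_facts(2)[OF d w]) (use c2 in auto)
    then show ?thesis using count_le_n cE by metis
  qed
  have amn: "n * (\<Prod>s\<in>S. X s cH) \<le> (\<Sum>s\<in>S. X s cH ^ n)" for cH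
  proof -
    have "real n * (\<Prod>s\<in>S. real (X s cH)) \<le> (\<Sum>s\<in>S. real (X s cH) ^ card S)"
      using amgm[OF finS, of "\<lambda>s. real (X s cH)"] n_def by simp
    then have "real (n * (\<Prod>s\<in>S. X s cH)) \<le> real (\<Sum>s\<in>S. X s cH ^ n)"
      by (simp add: n_def)
    then show ?thesis by (simp only: of_nat_le_iff)
  qed
  have e1: "n * count_free r k F V E = (\<Sum>cH\<in>A0. n * (\<Prod>s\<in>S. X s cH))"
    by (simp add: cnt sum_distrib_left)
  have e2: "(\<Sum>cH\<in>A0. n * (\<Prod>s\<in>S. X s cH)) \<le> (\<Sum>cH\<in>A0. \<Sum>s\<in>S. X s cH ^ n)"
    by (rule sum_mono) (rule amn)
  have "(\<Sum>cH\<in>A0. \<Sum>s\<in>S. X s cH ^ n) = (\<Sum>s\<in>S. \<Sum>cH\<in>A0. X s cH ^ n)" by (rule sum.swap)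
  also have "\<dots> = (\<Sum>s\<in>S. count_free r k F V (clone E V S s))" using cntw by simp
  also have "\<dots> \<le> (\<Sum>s\<in>S. count_free r k F V E)" by (rule sum_mono) (rule lew)
  also have "\<dots> = n * count_free r k F V E" by (simp add: n_def)
  finally have e3: "(\<Sum>cH\<in>A0. \<Sum>s\<in>S. X s cH ^ n) \<le> n * count_free r k F V E" .
  have "(\<Sum>cH\<in>A0. n * (\<Prod>s\<in>S. X s cH)) = (\<Sum>cH\<in>A0. \<Sum>s\<in>S. X s cH ^ n)"
    using e1 e2 e3 by linarith
  then have pw: "n * (\<Prod>s\<in>S. X s cH) = (\<Sum>s\<in>S. X s cH ^ n)" if "cH \<in> A0" for cH
    using sum_mono_inv[of "\<lambda>cH. n * (\<Prod>s\<in>S. X s cH)" A0 "\<lambda>cH. \<Sum>s\<in>S. X s cH ^ n" cH] amn that finA0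
    by blast
  have uv: "X u cH = X v cH" if "cH \<in> A0" for cH
  proof -
    have "real (n * (\<Prod>s\<in>S. X s cH)) = real (\<Sum>s\<in>S. X s cH ^ n)" using pw[OF that] by simp
    then have "real (card S) * (\<Prod>s\<in>S. real (X s cH)) = (\<Sum>s\<in>S. real (X s cH) ^ card S)"
      by (simp add: n_def)
    then have "real (X u cH) = real (X v cH)"
      using amgm_eq[of S "\<lambda>s. real (X s cH)" u v] finS assms(7,8) by simp
    then show ?thesis by simp
  qed
  show ?thesis
  proof
    fix cH
    show "ext_vec r k F E (V - S) {e \<in> E. e \<inter> S = {}} u cH = ext_vec r k F E (V - S) {e \<in> E. e \<inter> S = {}} v cH"
      using uv unfolding ext_vec_def A0_def X_def by simp
  qed
qed

end
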